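(* Let $\mathcal{A}$ be a finite abelian group with $|\mathcal{A}|\ge 3$. For integers $p_1\ge 1$ and $p_2\ge 0$, let $G_2(p_1,p_2)$ be the graph consisting of a triangle $v_2v_3v_4$, a vertex $v_1$ adjacent to $v_2$, $p_1$ pendant vertices adjacent to $v_1$, and $p_2$ pendant vertices adjacent to $v_2$. Then $G_2(p_1,p_2)$ is $\mathcal{A}$-vertex magic if and only if $p_2=0$ and $|\mathcal{A}|$ is even.
   Context: A map $\ell:V(G)\to\mathcal{A}\setminus\{0\}$ is an $\mathcal{A}$-vertex magic labeling if there is $\mu\in\mathcal{A}$ with $\sum_{u\in N(v)}\ell(u)=\mu$ for every vertex $v$; $G$ is $\mathcal{A}$-vertex magic if such a labeling exists. A pendant vertex is a vertex of degree $1$. *)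

theory Defs
  imports Main
begin

definition nbhd :: "'v set \<Rightarrow> ('v \<Rightarrow> 'v \<Rightarrow> bool) \<Rightarrow> 'v \<Rightarrow> 'v set" where
  "nbhd V E v = {u \<in> V. E v u}"

definition vertex_magic_labeling ::
  "'v set \<Rightarrow> ('v \<Rightarrow> 'v \<Rightarrow> bool) \<Rightarrow> ('v \<Rightarrow> 'a::ab_group_add) \<Rightarrow> bool" where
  "vertex_magic_labeling V E l \<longleftrightarrow>
     (\<forall>v\<in>V. l v \<noteq> 0) \<and> (\<exists>mu. \<forall>v\<in>V. (\<Sum>u\<in>nbhd V E v. l u) = mu)"

definition A_vertex_magic ::
  "'a::ab_group_add itself \<Rightarrow> 'v set \<Rightarrow> ('v \<Rightarrow> 'v \<Rightarrow> bool) \<Rightarrow> bool" where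
  "A_vertex_magic A V E \<longleftrightarrow> (\<exists>l :: 'v \<Rightarrow> 'a. vertex_magic_labeling V E l)"

text \<open>The graph G_2(p1,p2): vertices 1..4 are v1..v4; vertices 5..4+p1 are the pendants
at v1; vertices 5+p1..4+p1+p2 are the pendants at v2.\<close>

definition G2_V :: "nat \<Rightarrow> nat \<Rightarrow> nat set" where
  "G2_V p1 p2 = {1..4 + p1 + p2}"

definition G2_base :: "nat \<Rightarrow> nat \<Rightarrow> nat \<Rightarrow> nat \<Rightarrow> bool" where
  "G2_base p1 p2 u v \<longleftrightarrow>
     (u = 1 \<and> v = 2) \<or> (u = 2 \<and> v = 3) \<or> (u = 3 \<and> v = 4) \<or> (u = 2 \<and> v = 4) \<or>
     (u = 1 \<and> 5 \<le> v \<and> v \<le> 4 + p1) \<or>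
     (u = 2 \<and> 5 + p1 \<le> v \<and> v \<le> 4 + p1 + p2)"

definition G2_E :: "nat \<Rightarrow> nat \<Rightarrow> nat \<Rightarrow> nat \<Rightarrow> bool" where
  "G2_E p1 p2 u v \<longleftrightarrow> G2_base p1 p2 u v \<or> G2_base p1 p2 v u"

end

theory Submission
  imports Defs
begin

lemma invol_even:
  assumes "finite S" "\<forall>a\<in>S. f a \<in> S \<and> f (f a) = a \<and> f a \<noteq> a"
  shows "even (card S)"
  using assms
proof (induct "card S" arbitrary: S rule: less_induct)
  case less
  show ?case
  proof (cases "S = {}")
    case True then show ?thesis by simp
  next
    case False
    then obtain a where a: "a \<in> S" by blast
    let ?S = "S - {a, f a}"
    have fa: "f a \<in> S" "f a \<noteq> a" using a less.prems by auto
    have "card {a, f a} \<le> card S" using a fa less.prems(1) by (intro card_mono) auto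
    then have c: "card S = card ?S + 2"
      using a fa less.prems(1) by (simp add: card_Diff_subset)
    have "\<forall>b\<in>?S. f b \<in> ?S \<and> f (f b) = b \<and> f b \<noteq> b"
      using less.prems(2) a by (metis DiffD1 DiffD2 DiffI insertCI insertE singletonD)
    then have "even (card ?S)" using less.hyps[of ?S] c less.prems(1) by simp
    then show ?thesis using c by simp
  qed
qed

lemma even_card_iff:
  "even (card (UNIV :: 'a::{finite, ab_group_add} set)) \<longleftrightarrow> (\<exists>x::'a. x \<noteq> 0 \<and> x + x = 0)"
proof
  assume e: "even (card (UNIV :: 'a set))"
  let ?N = "{a::'a. - a \<noteq> a}"
  have "even (card ?N)" by (rule invol_even[where f=uminus]) auto
  moreover have "card (UNIV::'a set) = card ?N + card (UNIV - ?N)"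
    by (simp add: card_Diff_subset card_mono)
  ultimately have ev: "even (card (UNIV - ?N))" using e by simp
  have "0 \<in> UNIV - ?N" by simp
  then have "card (UNIV - ?N) \<noteq> 0" by (metis card_0_eq empty_iff finite)
  with ev have "card (UNIV - ?N) \<ge> 2" by presburger
  then have "\<not> (UNIV - ?N) \<subseteq> {0}"
    using card_mono[of "{0}" "UNIV - ?N"] by auto
  then obtain x where "x \<in> UNIV - ?N" "x \<noteq> 0" by blast
  then show "\<exists>x::'a. x \<noteq> 0 \<and> x + x = 0" by (metis (mono_tags, lifting) CollectI Diff_iff neg_equal_iff_equal add.right_inverse)
next
  assume "\<exists>x::'a. x \<noteq> 0 \<and> x + x = 0"
  then obtain x :: 'a where x: "x \<noteq> 0" "x + x = 0" by blast
  show "even (card (UNIV :: 'a set))"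
    by (rule invol_even[where f="\<lambda>a. a + x"]) (auto simp: x add.assoc)
qed

lemma sum_const_par:
  fixes x :: "'a::ab_group_add"
  assumes "x + x = 0" "finite S"
  shows "(\<Sum>v\<in>S. x) = (if even (card S) then 0 else x)"
  using assms(2)
proof (induct S rule: finite_induct)
  case empty then show ?case by simp
next
  case (insert a F)
  then show ?case using assms(1) by auto
qed

context
  fixes p1 p2 :: nat
begin

abbreviation "NB \<equiv> nbhd (G2_V p1 p2) (G2_E p1 p2)"

lemma nb1: "NB 1 = insert 2 {5..4+p1}"
  by (auto simp: nbhd_def G2_V_def G2_E_def G2_base_def)
lemma nb2: "NB 2 = {1,3,4} \<union> {5+p1..4+p1+p2}"
  by (auto simp: nbhd_def G2_V_def G2_E_def G2_base_def)
lemma nb3: "NB 3 = {2,4}"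
  by (auto simp: nbhd_def G2_V_def G2_E_def G2_base_def)
lemma nb4: "NB 4 = {2,3}"
  by (auto simp: nbhd_def G2_V_def G2_E_def G2_base_def)
lemma nbP1: "5 \<le> v \<Longrightarrow> v \<le> 4 + p1 \<Longrightarrow> NB v = {1}"
  by (auto simp: nbhd_def G2_V_def G2_E_def G2_base_def)
lemma nbP2: "5 + p1 \<le> v \<Longrightarrow> v \<le> 4 + p1 + p2 \<Longrightarrow> NB v = {2}"
  by (auto simp: nbhd_def G2_V_def G2_E_def G2_base_def)

end

theorem proposition3p2:
  fixes p1 p2 :: nat
    and A :: "'a::{finite, ab_group_add} itself"
  assumes "p1 \<ge> 1"
    and "card (UNIV :: 'a set) \<ge> 3"
  shows "A_vertex_magic A (G2_V p1 p2) (G2_E p1 p2) \<longleftrightarrow> p2 = 0 \<and> even (card (UNIV :: 'a set))"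
proof
  assume "A_vertex_magic A (G2_V p1 p2) (G2_E p1 p2)"
  then obtain l :: "nat \<Rightarrow> 'a" and mu where nz: "\<forall>v\<in>G2_V p1 p2. l v \<noteq> 0"
    and mg: "\<forall>v\<in>G2_V p1 p2. (\<Sum>u\<in>NB p1 p2 v. l u) = mu"
    unfolding A_vertex_magic_def vertex_magic_labeling_def by blast
  have inV: "v \<in> G2_V p1 p2" if "1 \<le> v" "v \<le> 4 + p1 + p2" for v
    using that by (simp add: G2_V_def)
  have l1: "l 1 = mu" using mg[rule_format, of 5] nbP1[of 5 p1 p2] assms(1) inV[of 5] by simp
  have e3: "l 2 + l 4 = mu" using mg[rule_format, of 3] nb3[of p1 p2] inV[of 3] by simp
  have e4: "l 2 + l 3 = mu" using mg[rule_format, of 4] nb4[of p1 p2] inV[of 4] by simp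
  have n4: "l 4 \<noteq> 0" "l 3 \<noteq> 0" using nz inV[of 4] inV[of 3] by auto
  have p2: "p2 = 0"
  proof (rule ccontr)
    assume "p2 \<noteq> 0"
    moreover have "NB p1 p2 (5+p1) = {2}" using nbP2[of p1 "5+p1" p2] \<open>p2 \<noteq> 0\<close> by simp
    ultimately have "l 2 = mu" using mg[rule_format, of "5+p1"] inV[of "5+p1"] by simp
    then show False using e3 n4 by simp
  qed
  have e2: "l 1 + (l 3 + l 4) = mu"
    using mg[rule_format, of 2] nb2[of p1 p2] inV[of 2] p2 by (simp add: add.assoc)
  have "l 3 = l 4" using e3 e4 by (metis add_left_cancel)
  then have "l 3 + l 3 = 0" using e2 l1 by simp
  then show "p2 = 0 \<and> even (card (UNIV :: 'a set))" using p2 n4 even_card_iff by blast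
next
  assume "p2 = 0 \<and> even (card (UNIV :: 'a set))"
  then have p2: "p2 = 0" and "even (card (UNIV :: 'a set))" by auto
  then obtain x :: 'a where x: "x \<noteq> 0" "x + x = 0" using even_card_iff by blast
  have "\<not> (UNIV :: 'a set) \<subseteq> {0, x}"
  proof
    assume "(UNIV :: 'a set) \<subseteq> {0, x}"
    then have "card (UNIV :: 'a set) \<le> card {0, x}" by (simp add: card_mono)
    also have "\<dots> \<le> 2" by (simp add: card_insert_le_m1)
    finally show False using assms(2) by simp
  qed
  then obtain mu :: 'a where mu: "mu \<noteq> 0" "mu \<noteq> x" by blast
  have mx: "x - mu \<noteq> 0" "mu - x \<noteq> 0" using mu by auto
  define l where "l v = (if v = 1 then mu else if v = 2 then mu - x else if v = 3 \<or> v = 4 then x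
      else if even p1 \<and> v = 5 then mu else if even p1 \<and> v = 6 then x - mu else x)" for v :: nat
  have sP: "(\<Sum>u\<in>{5..4+p1}. l u) = x"
  proof (cases "even p1")
    case False
    have "(\<Sum>u\<in>{5..4+p1}. l u) = (\<Sum>u\<in>{5..4+p1}. x)"
      by (rule sum.cong) (auto simp: l_def False)
    then show ?thesis using sum_const_par[OF x(2), of "{5..4+p1}"] False by simp
  next
    case True
    then have p: "p1 \<ge> 2" using assms(1) by presburger
    then have S: "{5..4+p1} = insert 5 (insert 6 {7..4+p1})" by auto
    have "(\<Sum>u\<in>{7..4+p1}. l u) = (\<Sum>u\<in>{7..4+p1}. x)"
      by (rule sum.cong) (auto simp: l_def)
    also have "\<dots> = 0" using sum_const_par[OF x(2), of "{7..4+p1}"] True p by simp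
    finally show ?thesis unfolding S using True by (simp add: l_def)
  qed
  have "vertex_magic_labeling (G2_V p1 p2) (G2_E p1 p2) l"
    unfolding vertex_magic_labeling_def
  proof (intro conjI ballI exI)
    fix v assume "v \<in> G2_V p1 p2"
    show "l v \<noteq> 0" using mu mx x by (simp add: l_def)
  next
    fix v assume v: "v \<in> G2_V p1 p2"
    then have "v = 1 \<or> v = 2 \<or> v = 3 \<or> v = 4 \<or> (5 \<le> v \<and> v \<le> 4 + p1)"
      using p2 by (auto simp: G2_V_def)
    then show "(\<Sum>u\<in>NB p1 p2 v. l u) = mu"
    proof (elim disjE)
      assume "v = 1"
      have "(\<Sum>u\<in>NB p1 p2 1. l u) = l 2 + (\<Sum>u\<in>{5..4+p1}. l u)"
        unfolding nb1 by (rule sum.insert) auto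
      also have "\<dots> = mu" using sP by (simp add: l_def)
      finally show ?thesis using \<open>v = 1\<close> by simp
    next
      assume "v = 2" then show ?thesis using p2 x by (simp add: nb2 l_def add.assoc)
    next
      assume "v = 3" then show ?thesis by (simp add: nb3 l_def)
    next
      assume "v = 4" then show ?thesis by (simp add: nb4 l_def)
    next
      assume "5 \<le> v \<and> v \<le> 4 + p1" then show ?thesis by (simp add: nbP1 l_def)
    qed
  qed
  then show "A_vertex_magic A (G2_V p1 p2) (G2_E p1 p2)"
    unfolding A_vertex_magic_def by blast
qed

end
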